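(* Let $M$ be a matroid, $\psi\colon E(M)\to\Gamma$ a labeling to an abelian group, and $F\subseteq\Gamma$ with $|F|=2$. If $M$ has at least one $F$-avoiding basis, then for every basis $B$ of $M$ there exists an $F$-avoiding basis $B^*$ with $|B\setminus B^*|\le2$.
   Context: $\psi(S):=\sum_{x\in S}\psi(x)$; a basis $B$ is $F$-avoiding if $\psi(B)\notin F$. *)

theory Defs
  imports Main
begin

definition matroid :: "'a set \<Rightarrow> ('a set \<Rightarrow> bool) \<Rightarrow> bool" where
  "matroid E indep \<longleftrightarrow>
     finite E \<and>
     (\<forall>X. indep X \<longrightarrow> X \<subseteq> E) \<and>
     indep {} \<and>
     (\<forall>X Y. indep X \<and> Y \<subseteq> X \<longrightarrow> indep Y) \<and>
     (\<forall>X Y. indep X \<and> indep Y \<and> card X < card Y \<longrightarrow>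
        (\<exists>y \<in> Y - X. indep (insert y X)))"

definition basis :: "('a set \<Rightarrow> bool) \<Rightarrow> 'a set \<Rightarrow> bool" where
  "basis indep B \<longleftrightarrow> indep B \<and> (\<forall>X. indep X \<and> B \<subseteq> X \<longrightarrow> X = B)"

definition F_avoiding :: "('a \<Rightarrow> 'g::comm_monoid_add) \<Rightarrow> 'g set \<Rightarrow> 'a set \<Rightarrow> bool" where
  "F_avoiding \<psi> F B \<longleftrightarrow> (\<Sum>x\<in>B. \<psi> x) \<notin> F"

end

theory Submission
  imports Defs
begin

lemma alg:
  fixes p1 p2 p3 q1 q2 q3 d :: "'g::ab_group_add"
  assumes h1: "p1 - q1 = d" and h2: "p2 - q2 = - d" and h3: "p3 - q3 = - d"
    and t: "d + d + d = 0" and nz: "d + d \<noteq> 0"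
    and c2: "p2 - q1 = d \<or> p2 - q2 = d \<or> p2 - q3 = d"
    and c3: "p3 - q1 = d \<or> p3 - q2 = d \<or> p3 - q3 = d"
    and r2: "p1 - q2 = d \<or> p2 - q2 = d \<or> p3 - q2 = d"
    and r3: "p1 - q3 = d \<or> p2 - q3 = d \<or> p3 - q3 = d"
  shows False
proof -
  have Q1: "q1 = p1 - d" using h1 by (simp add: algebra_simps)
  have Q2: "q2 = p2 + d" using h2 by (simp add: algebra_simps)
  have Q3: "q3 = p3 + d" using h3 by (simp add: algebra_simps)
  define u where "u = p2 - p1"
  define w where "w = p3 - p1"
  have P2: "p2 = p1 + u" and P3: "p3 = p1 + w" by (simp_all add: u_def w_def)
  have dn: "d \<noteq> 0" using nz by auto
  have md: "- d = d + d" using t by (metis add.assoc neg_eq_iff_add_eq_0)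
  have ndd: "- d \<noteq> d" using nz by (metis md add_cancel_right_left dn)
  have C2: "u = 0 \<or> u - w = d + d"
    using c2 ndd unfolding Q1 Q2 Q3 P2 P3 by (auto simp: algebra_simps)
  have C3: "w = 0 \<or> w - u = d + d"
    using c3 ndd unfolding Q1 Q2 Q3 P2 P3 by (auto simp: algebra_simps)
  have R2: "u = d \<or> w - u = d + d"
    using r2 ndd md unfolding Q1 Q2 Q3 P2 P3 by (auto simp: algebra_simps)
  have R3: "w = d \<or> u - w = d + d"
    using r3 ndd md unfolding Q1 Q2 Q3 P2 P3 by (auto simp: algebra_simps)
  have n2: "- (d + d) = d" using t by (metis neg_eq_iff_add_eq_0)
  have A1: "d + d \<noteq> d" using dn by simp
  from C2 C3 consider (a) "u = 0" "w = 0" | (b) "u = 0" "w - u = d + d"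
    | (c) "u - w = d + d" "w = 0" | (e) "u - w = d + d" "w - u = d + d" by blast
  then show False
  proof cases
    case a
    then show ?thesis using R2 dn nz by auto
  next
    case b
    then have "w = d + d" by simp
    then show ?thesis using R3 A1 n2 b by auto
  next
    case c
    then have "u = d + d" by simp
    then show ?thesis using R2 A1 n2 c by auto
  next
    case e
    have "w - u = - (u - w)" by simp
    then have "w - u = d" using e n2 by simp
    then show ?thesis using e A1 by simp
  qed
qed
lemma m_aug: "matroid E indep \<Longrightarrow> indep X \<Longrightarrow> indep Y \<Longrightarrow> card X < card Y \<Longrightarrow> \<exists>y\<in>Y - X. indep (insert y X)"
  unfolding matroid_def by blast
lemma m_sub: "matroid E indep \<Longrightarrow> indep X \<Longrightarrow> Y \<subseteq> X \<Longrightarrow> indep Y"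
  unfolding matroid_def by blast
lemma m_fin: "matroid E indep \<Longrightarrow> indep X \<Longrightarrow> finite X"
  unfolding matroid_def by (meson finite_subset)

lemma basis_card_le:
  assumes M: "matroid E indep" and b: "basis indep B" and X: "indep X"
  shows "card X \<le> card B"
proof (rule ccontr)
  assume "\<not> card X \<le> card B"
  then have "card B < card X" by simp
  with m_aug[OF M _ X] b obtain y where "y \<in> X - B" "indep (insert y B)"
    unfolding basis_def by blast
  then show False using b unfolding basis_def by blast
qed

lemma basis_iff_card:
  assumes M: "matroid E indep" and b: "basis indep B0"
  shows "basis indep X \<longleftrightarrow> indep X \<and> card X = card B0"
proof
  assume bX: "basis indep X"
  then show "indep X \<and> card X = card B0"
    using basis_card_le[OF M b] basis_card_le[OF M bX] b unfolding basis_def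
    by (simp add: le_antisym)
next
  assume h: "indep X \<and> card X = card B0"
  show "basis indep X" unfolding basis_def
  proof (intro conjI allI impI)
    show "indep X" using h by simp
    fix Z assume Z: "indep Z \<and> X \<subseteq> Z"
    have "card Z \<le> card X" using basis_card_le[OF M b, of Z] Z h by simp
    then show "Z = X" using card_seteq[of Z X] Z m_fin[OF M] by blast
  qed
qed

lemma max_card:
  assumes "finite S" "S \<noteq> {}"
  shows "\<exists>K\<in>S. \<forall>K'\<in>S. card K' \<le> card K"
proof -
  let ?m = "Max (card ` S)"
  have "?m \<in> card ` S" using assms by simp
  then obtain K where K: "K \<in> S" "card K = ?m" by auto
  have "\<forall>K'\<in>S. card K' \<le> card K" using K assms by simp
  then show ?thesis using K by blast
qed

lemma sym_exch:
  assumes M: "matroid E indep" and bX: "basis indep X" and bY: "basis indep Y"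
    and eX: "e \<in> X" and eY: "e \<notin> Y"
  shows "\<exists>y\<in>Y - X. basis indep (insert y (X - {e})) \<and> basis indep (insert e (Y - {y}))"
proof -
  have iX: "indep X" and iY: "indep Y" using bX bY unfolding basis_def by auto
  have fX: "finite X" and fY: "finite Y" using m_fin[OF M] iX iY by auto
  have cXY: "card X = card Y" using basis_iff_card[OF M bX] bY by simp
  have dep: "\<not> indep (insert e Y)" using bY eY unfolding basis_def by blast
  define P where "P = (\<lambda>n. \<exists>C. C \<subseteq> Y \<and> \<not> indep (insert e C) \<and> card C = n)"
  have "P (card Y)" using dep unfolding P_def by blast
  then have PL: "P (LEAST n. P n)" by (rule LeastI)
  then obtain C where C: "C \<subseteq> Y" "\<not> indep (insert e C)" "card C = (LEAST n. P n)"
    unfolding P_def by blast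
  have minC: "indep (insert e C')" if "C' \<subseteq> Y" "card C' < card C" for C'
  proof (rule ccontr)
    assume "\<not> indep (insert e C')"
    then have "P (card C')" using that unfolding P_def by blast
    then have "(LEAST n. P n) \<le> card C'" by (rule Least_le)
    then show False using that C by simp
  qed
  have fC: "finite C" using C fY finite_subset by blast
  have iC: "indep C" using m_sub[OF M iY C(1)] .
  have eC: "e \<notin> C" using C eY by blast
  have cl3: "indep (insert e (Y - {y}))" if yC: "y \<in> C" for y
  proof (rule ccontr)
    assume depW: "\<not> indep (insert e (Y - {y}))"
    define A where "A = insert e (C - {y})"
    define W where "W = insert e (Y - {y})"
    have iA: "indep A" unfolding A_def
      using minC[of "C - {y}"] C yC fC by (meson Diff_subset card_Diff1_less subset_trans)
    define S where "S = {K. indep K \<and> A \<subseteq> K \<and> K \<subseteq> W}"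
    have fW: "finite W" unfolding W_def using fY by simp
    have "finite S" unfolding S_def using fW by (simp add: finite_subset)
    moreover have "A \<in> S" unfolding S_def A_def W_def using iA A_def C yC by auto
    ultimately obtain K where K: "K \<in> S" and Kmax: "\<forall>K'\<in>S. card K' \<le> card K"
      using max_card by blast
    have iK: "indep K" and AK: "A \<subseteq> K" and KW: "K \<subseteq> W" using K unfolding S_def by auto
    have fK: "finite K" using KW fW finite_subset by blast
    have iYy: "indep (Y - {y})" using m_sub[OF M iY] by blast
    have ge: "card (Y - {y}) \<le> card K"
    proof (rule ccontr)
      assume "\<not> ?thesis"
      then obtain z where z: "z \<in> (Y - {y}) - K" "indep (insert z K)"
        using m_aug[OF M iK iYy] by auto
      have "insert z K \<in> S" unfolding S_def using z AK KW W_def by auto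
      then have "card (insert z K) \<le> card K" using Kmax by blast
      then show False using z fK by simp
    qed
    have "K \<noteq> W" using iK depW W_def by blast
    then have "K \<subset> W" using KW by blast
    then have "card K < card W" using fW psubset_card_mono by blast
    moreover have "card W = card (Y - {y}) + 1" unfolding W_def using eY fY by simp
    moreover have "card (Y - {y}) + 1 = card Y" using yC C fY
      by (metis One_nat_def Suc_pred card_Diff_singleton card_gt_0_iff empty_iff subsetD add.commute plus_1_eq_Suc)
    ultimately have "card K < card Y" using ge by simp
    then obtain w where w: "w \<in> Y - K" "indep (insert w K)"
      using m_aug[OF M iK iY] by auto
    show False
    proof (cases "w = y")
      case True
      have "insert e C \<subseteq> insert w K" using AK True A_def by auto
      then show False using m_sub[OF M w(2)] C(2) by blast
    next
      case False
      have "insert w K \<in> S" unfolding S_def using w False AK KW W_def by auto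
      then have "card (insert w K) \<le> card K" using Kmax by blast
      then show False using w fK by simp
    qed
  qed
  have cl4: "\<exists>y\<in>C - X. indep (insert y (X - {e}))"
  proof (rule ccontr)
    assume nc: "\<not> ?thesis"
    define I where "I = X - {e}"
    define W where "W = C \<union> I"
    define S where "S = {K. indep K \<and> C \<subseteq> K \<and> K \<subseteq> W}"
    have fW: "finite W" unfolding W_def I_def using fC fX by simp
    have "finite S" unfolding S_def using fW by (simp add: finite_subset)
    moreover have "C \<in> S" unfolding S_def W_def using iC by auto
    ultimately obtain K where K: "K \<in> S" and Kmax: "\<forall>K'\<in>S. card K' \<le> card K"
      using max_card by blast
    have iK: "indep K" and CK: "C \<subseteq> K" and KW: "K \<subseteq> W" using K unfolding S_def by auto
    have fK: "finite K" using KW fW finite_subset by blast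
    have iI: "indep I" unfolding I_def using m_sub[OF M iX] by blast
    have le: "card K \<le> card I"
    proof (rule ccontr)
      assume "\<not> ?thesis"
      then obtain z where z: "z \<in> K - I" "indep (insert z I)"
        using m_aug[OF M iI iK] by auto
      have "z \<in> C" using z KW W_def by auto
      moreover have "z \<notin> X" using z I_def eC \<open>z \<in> C\<close> by auto
      ultimately show False using nc z I_def by blast
    qed
    have "card I < card X" unfolding I_def using eX fX by (meson card_Diff1_less)
    then have "card K < card X" using le by simp
    then obtain z where z: "z \<in> X - K" "indep (insert z K)"
      using m_aug[OF M iK iX] by auto
    show False
    proof (cases "z = e")
      case True
      have "insert e C \<subseteq> insert z K" using CK True by auto
      then show False using m_sub[OF M z(2)] C(2) by blast
    next
      case False
      have "insert z K \<in> S" unfolding S_def using z False CK KW W_def I_def by auto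
      then have "card (insert z K) \<le> card K" using Kmax by blast
      then show False using z fK by simp
    qed
  qed
  then obtain y where y: "y \<in> C - X" "indep (insert y (X - {e}))" by blast
  have yY: "y \<in> Y - X" using y C by auto
  have c1: "card (insert y (X - {e})) = card X" using y eX fX
    by (simp add: card_Suc_Diff1 del: card_Diff_insert)
  have c2: "card (insert e (Y - {y})) = card X" using yY eY fY cXY
    by (simp add: card_Suc_Diff1 del: card_Diff_insert)
  have "basis indep (insert y (X - {e}))" using basis_iff_card[OF M bX] y c1 by simp
  moreover have "basis indep (insert e (Y - {y}))" using basis_iff_card[OF M bX] cl3 y c2 by simp
  ultimately show ?thesis using yY by blast
qed
lemma sum_exch: "finite B \<Longrightarrow> r \<in> B \<Longrightarrow> c \<notin> B \<Longrightarrow>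
   sum \<psi> (insert c (B - {r})) = sum \<psi> B + (\<psi> c - \<psi> r)"
  for \<psi> :: "'a \<Rightarrow> 'g::ab_group_add"
  by (simp add: sum_diff1 algebra_simps)

lemma sum_diffs: "finite B \<Longrightarrow> finite D \<Longrightarrow>
   sum \<psi> D - sum \<psi> B = sum \<psi> (D - B) - sum \<psi> (B - D)"
  for \<psi> :: "'a \<Rightarrow> 'g::ab_group_add"
proof -
  assume fB: "finite B" and fD: "finite D"
  have 1: "sum \<psi> D = sum \<psi> (D \<inter> B) + sum \<psi> (D - B)" using sum.Int_Diff[OF fD] .
  have 2: "sum \<psi> B = sum \<psi> (D \<inter> B) + sum \<psi> (B - D)" using sum.Int_Diff[OF fB, of \<psi> D]
    by (simp add: Int_commute)
  show ?thesis unfolding 1 2 by simp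
qed

lemma card_le2: "finite A \<Longrightarrow> X \<subseteq> A \<Longrightarrow> card A \<le> 2 \<Longrightarrow> card X \<le> 2"
  by (meson card_mono le_trans)

lemma core:
  fixes \<psi> :: "'a \<Rightarrow> 'g::ab_group_add"
  assumes M: "matroid E indep" and cF: "card F = 2"
    and hyp: "\<forall>D'. basis indep D' \<and> card (B - D') \<le> 2 \<longrightarrow> sum \<psi> D' \<in> F"
    and bB: "basis indep B" and bD: "basis indep D" and k: "card (B - D) = 3"
  shows "sum \<psi> D \<in> F"
proof (rule ccontr)
  assume sF: "sum \<psi> D \<notin> F"
  define f where "f = sum \<psi> B"
  define s where "s = sum \<psi> D"
  have fF: "f \<in> F" using hyp bB unfolding f_def by simp
  obtain g where Fg: "F = {f, g}" and gf: "g \<noteq> f"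
    using cF fF by (metis card_2_iff insert_commute insertE singletonD)
  define d where "d = g - f"
  have gd: "g = f + d" unfolding d_def by simp
  have iB: "indep B" and iD: "indep D" using bB bD unfolding basis_def by auto
  have fB: "finite B" and fD: "finite D" using m_fin[OF M] iB iD by auto
  have sF': "s \<noteq> f" "s \<noteq> g" using sF Fg s_def by auto
  have cardBD: "card (D - B) = 3"
  proof -
    have "card B = card D" using basis_iff_card[OF M bB] bD by simp
    moreover have "card (B - D) = card B - card (B \<inter> D)" using fB by (intro card_Diff_subset_Int) simp
    moreover have "card (D - B) = card D - card (D \<inter> B)" using fD by (intro card_Diff_subset_Int) simp
    ultimately show ?thesis using k by (simp add: Int_commute)
  qed
  have key: "\<psi> c - \<psi> r = d \<and> s = f + d + d"
    if r: "r \<in> B - D" and c: "c \<in> D - B" and b1: "basis indep (insert c (B - {r}))"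
      and b2: "basis indep (insert r (D - {c}))" for r c
  proof -
    define m where "m = \<psi> c - \<psi> r"
    have v1: "sum \<psi> (insert c (B - {r})) = f + m" unfolding f_def m_def
      using sum_exch[OF fB, of r c \<psi>] r c by simp
    have "card (B - insert c (B - {r})) \<le> 2"
      by (rule card_le2[of "{r}"]) auto
    then have "f + m \<in> F" using hyp b1 v1 by metis
    then have m01: "m = 0 \<or> m = d" using Fg gd by auto
    have v2: "sum \<psi> (insert r (D - {c})) = s - m" unfolding s_def m_def
      using sum_exch[OF fD, of c r \<psi>] r c by (simp add: algebra_simps)
    have "card (B - insert r (D - {c})) \<le> 2"
      apply (rule card_le2[of "(B - D) - {r}"])
      using fB r c k by auto
    then have "s - m \<in> F" using hyp b2 v2 by metis
    then have sm: "s - m = f \<or> s - m = f + d" using Fg gd by auto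
    have "m \<noteq> 0" using sm sF' gd by auto
    then have md: "m = d" using m01 by simp
    then have "s = f + d + d" using sm sF' gd by (auto simp: algebra_simps)
    then show ?thesis using md m_def by simp
  qed
  have "B - D \<noteq> {}" using k by (metis card.empty zero_neq_numeral)
  then obtain r1 where r1: "r1 \<in> B - D" by blast
  obtain c1 where c1: "c1 \<in> D - B" "basis indep (insert c1 (B - {r1}))"
      "basis indep (insert r1 (D - {c1}))"
    using sym_exch[OF M bB bD, of r1] r1 by auto
  have m1: "\<psi> c1 - \<psi> r1 = d" and sd: "s = f + d + d" using key[OF r1 c1] by auto
  have dd: "d + d \<noteq> 0" using sd sF' by auto
  have "card (B - D - {r1}) = 2" using k r1 fB by simp
  then have "B - D - {r1} \<noteq> {}" by (metis card.empty zero_neq_numeral)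
  then obtain r2 where r2: "r2 \<in> B - D" "r2 \<noteq> r1" by blast
  define B1 where "B1 = insert c1 (B - {r1})"
  have bB1: "basis indep B1" using c1 B1_def by simp
  have fB1: "finite B1" using fB B1_def by simp
  have r2B1: "r2 \<in> B1" "r2 \<notin> D" using r2 B1_def by auto
  obtain c2 where c2: "c2 \<in> D - B1" "basis indep (insert c2 (B1 - {r2}))"
      "basis indep (insert r2 (D - {c2}))"
    using sym_exch[OF M bB1 bD, of r2] r2B1 by auto
  have c2': "c2 \<in> D - B" "c2 \<noteq> c1" using c2(1) B1_def r1 by auto
  define m2 where "m2 = \<psi> c2 - \<psi> r2"
  have vB1: "sum \<psi> B1 = f + d" unfolding B1_def f_def
    using sum_exch[OF fB, of r1 c1 \<psi>] r1 c1 m1 by simp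
  have v1: "sum \<psi> (insert c2 (B1 - {r2})) = f + d + m2" unfolding m2_def
    using sum_exch[OF fB1, of r2 c2 \<psi>] r2B1 c2 vB1 by simp
  have "card (B - insert c2 (B1 - {r2})) \<le> 2"
    apply (rule card_le2[of "{r1, r2}"])
    using B1_def c2' by (auto simp: card_insert_if)
  then have "f + d + m2 \<in> F" using hyp c2(2) v1 by metis
  then have "f + d + m2 = f \<or> f + d + m2 = f + d" using Fg gd by auto
  then have "d + m2 = 0 \<or> m2 = 0" by (auto simp: algebra_simps)
  then have m01: "m2 = - d \<or> m2 = 0" by (metis add.commute eq_neg_iff_add_eq_0)
  have v2: "sum \<psi> (insert r2 (D - {c2})) = s - m2" unfolding s_def m2_def
    using sum_exch[OF fD, of c2 r2 \<psi>] r2 c2' by (simp add: algebra_simps)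
  have "card (B - insert r2 (D - {c2})) \<le> 2"
    apply (rule card_le2[of "(B - D) - {r2}"])
    using fB r2 c2' k by auto
  then have "s - m2 \<in> F" using hyp c2(3) v2 by metis
  then have sm: "s - m2 = f \<or> s - m2 = f + d" using Fg gd by auto
  have "m2 \<noteq> 0" using sm sF' gd by auto
  then have m2d: "m2 = - d" using m01 by simp
  have ddd: "d + d + d = 0"
  proof -
    have "f + d + d + d = f \<or> f + d + d + d = f + d" using sm m2d sd by (simp add: algebra_simps)
    then show ?thesis using dd by (auto simp: algebra_simps)
  qed
  have "card (B - D - {r1, r2}) = 1" using k r1 r2 fB
    by (simp add: card_Diff_subset)
  then obtain r3 where r3: "B - D - {r1, r2} = {r3}" by (rule card_1_singletonE)
  have RR: "B - D = {r1, r2, r3}" "r3 \<noteq> r1" "r3 \<noteq> r2" using r3 r1 r2 by auto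
  have "card (D - B - {c1, c2}) = 1" using cardBD c1 c2' fD
    by (simp add: card_Diff_subset)
  then obtain c3 where c3: "D - B - {c1, c2} = {c3}" by (rule card_1_singletonE)
  have CC: "D - B = {c1, c2, c3}" "c3 \<noteq> c1" "c3 \<noteq> c2" using c3 c1 c2' by auto
  have "s - f = sum \<psi> (D - B) - sum \<psi> (B - D)"
    unfolding s_def f_def using sum_diffs[OF fB fD] .
  also have "\<dots> = (\<psi> c1 + \<psi> c2 + \<psi> c3) - (\<psi> r1 + \<psi> r2 + \<psi> r3)"
    using RR CC r2 c2' by (simp add: algebra_simps)
  finally have seq: "s - f = (\<psi> c1 + \<psi> c2 + \<psi> c3) - (\<psi> r1 + \<psi> r2 + \<psi> r3)" .
  have md: "- d = d + d" using ddd by (metis add.assoc neg_eq_iff_add_eq_0)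
  have h3: "\<psi> c3 - \<psi> r3 = - d"
  proof -
    have "d + d = (\<psi> c1 - \<psi> r1) + (\<psi> c2 - \<psi> r2) + (\<psi> c3 - \<psi> r3)"
      using seq sd by (simp add: algebra_simps)
    then have "d + d = d + - d + (\<psi> c3 - \<psi> r3)" using m1 m2d m2_def by simp
    then have "\<psi> c3 - \<psi> r3 = d + d" by simp
    then show ?thesis using md by simp
  qed
  have colx: "\<exists>r\<in>B - D. \<psi> c - \<psi> r = d" if c: "c \<in> D - B" for c
  proof -
    obtain y where y: "y \<in> B - D" "basis indep (insert y (D - {c}))"
        "basis indep (insert c (B - {y}))"
      using sym_exch[OF M bD bB, of c] c by auto
    then show ?thesis using key[OF y(1) c y(3) y(2)] by blast
  qed
  have rowx: "\<exists>c\<in>D - B. \<psi> c - \<psi> r = d" if r: "r \<in> B - D" for r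
  proof -
    obtain y where y: "y \<in> D - B" "basis indep (insert y (B - {r}))"
        "basis indep (insert r (D - {y}))"
      using sym_exch[OF M bB bD, of r] r by auto
    then show ?thesis using key[OF r y(1) y(2) y(3)] by blast
  qed
  have h2: "\<psi> c2 - \<psi> r2 = - d" using m2d m2_def by simp
  have c3D: "c3 \<in> D - B" and r3B: "r3 \<in> B - D" using RR CC by auto
  have D1: "\<psi> c2 - \<psi> r1 = d \<or> \<psi> c2 - \<psi> r2 = d \<or> \<psi> c2 - \<psi> r3 = d"
    using colx[OF c2'(1)] unfolding RR(1) by blast
  have D2: "\<psi> c3 - \<psi> r1 = d \<or> \<psi> c3 - \<psi> r2 = d \<or> \<psi> c3 - \<psi> r3 = d"
    using colx[OF c3D] unfolding RR(1) by blast
  have D3: "\<psi> c1 - \<psi> r2 = d \<or> \<psi> c2 - \<psi> r2 = d \<or> \<psi> c3 - \<psi> r2 = d"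
    using rowx[OF r2(1)] unfolding CC(1) by blast
  have D4: "\<psi> c1 - \<psi> r3 = d \<or> \<psi> c2 - \<psi> r3 = d \<or> \<psi> c3 - \<psi> r3 = d"
    using rowx[OF r3B] unfolding CC(1) by blast
  show False by (rule alg[OF m1 h2 h3 ddd dd D1 D2 D3 D4])
qed

lemma induct_main:
  fixes \<psi> :: "'a \<Rightarrow> 'g::ab_group_add"
  assumes M: "matroid E indep" and cF: "card F = 2"
  shows "\<forall>B D. basis indep B \<and> (\<forall>D'. basis indep D' \<and> card (B - D') \<le> 2 \<longrightarrow> sum \<psi> D' \<in> F)
            \<and> basis indep D \<and> card (B - D) \<le> n \<longrightarrow> sum \<psi> D \<in> F"
proof (induction n)
  case 0
  then show ?case by fastforce
next
  case (Suc n)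
  show ?case
  proof (intro allI impI, elim conjE)
    fix B D
    assume bB: "basis indep B" and hyp: "\<forall>D'. basis indep D' \<and> card (B - D') \<le> 2 \<longrightarrow> sum \<psi> D' \<in> F"
      and bD: "basis indep D" and le: "card (B - D) \<le> Suc n"
    show "sum \<psi> D \<in> F"
    proof (cases "card (B - D) \<le> 2")
      case True
      then show ?thesis using hyp bD by blast
    next
      case False
      have fB: "finite B" using bB m_fin[OF M] unfolding basis_def by blast
      consider "card (B - D) \<le> n" | "card (B - D) = 3" | "card (B - D) = Suc n" "n \<ge> 3"
        using le False by linarith
      then show ?thesis
      proof cases
        case 1
        then show ?thesis using Suc.IH bB hyp bD by blast
      next
        case 2
        then show ?thesis using core[OF M cF hyp bB bD] by blast
      next
        case 3
        have "B - D \<noteq> {}" using 3 by (metis card.empty nat.distinct(1))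
        then obtain e where e: "e \<in> B - D" by blast
        obtain y where y: "y \<in> D - B" "basis indep (insert y (B - {e}))"
          using sym_exch[OF M bB bD, of e] e by blast
        define B1 where "B1 = insert y (B - {e})"
        have bB1: "basis indep B1" using y B1_def by simp
        have fB1: "finite B1" using fB B1_def by simp
        have hyp1: "\<forall>D'. basis indep D' \<and> card (B1 - D') \<le> 2 \<longrightarrow> sum \<psi> D' \<in> F"
        proof (intro allI impI, elim conjE)
          fix D' assume bD': "basis indep D'" and c2: "card (B1 - D') \<le> 2"
          have "B - D' \<subseteq> insert e (B1 - D')" using B1_def by auto
          then have "card (B - D') \<le> card (insert e (B1 - D'))"
            using fB1 by (intro card_mono) auto
          also have "\<dots> \<le> Suc (card (B1 - D'))" using fB1 by (simp add: card_insert_if)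
          finally have "card (B - D') \<le> n" using c2 3 by linarith
          then show "sum \<psi> D' \<in> F" using Suc.IH bB hyp bD' by blast
        qed
        have "B1 - D = (B - D) - {e}" using B1_def y by auto
        then have "card (B1 - D) = n" using 3 e fB by simp
        then show ?thesis using Suc.IH bB1 hyp1 bD by (meson order_refl)
      qed
    qed
  qed
qed

theorem theorem5p33:
  fixes E :: "'a set" and indep :: "'a set \<Rightarrow> bool"
    and \<psi> :: "'a \<Rightarrow> 'g::ab_group_add" and F :: "'g set"
  assumes "matroid E indep"
    and "card F = 2"
    and "\<exists>B. basis indep B \<and> F_avoiding \<psi> F B"
    and "basis indep B"
  shows "\<exists>B'. basis indep B' \<and> F_avoiding \<psi> F B' \<and> card (B - B') \<le> 2"
proof (rule ccontr)
  assume na: "\<not> ?thesis"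
  have hyp: "\<forall>D'. basis indep D' \<and> card (B - D') \<le> 2 \<longrightarrow> sum \<psi> D' \<in> F"
    using na unfolding F_avoiding_def by blast
  obtain B0 where B0: "basis indep B0" "sum \<psi> B0 \<notin> F"
    using assms(3) unfolding F_avoiding_def by blast
  have "sum \<psi> B0 \<in> F"
    using induct_main[OF assms(1) assms(2), of \<psi> "card (B - B0)"] assms(4) hyp B0(1) by blast
  then show False using B0(2) by blast
qed

end
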